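(* Let $\mathcal C$ be an $R$-coring satisfying the left $\alpha$-condition. The following are equivalent: (i) $\mathrm{Rat}^{\mathcal C}({}^*\mathcal C)$ is dense in ${}^*\mathcal C$ in the $\mathcal C$-adic topology; (ii) $\mathrm{Rat}^{\mathcal C}({}^*\mathcal C)$ is dense in ${}^*\mathcal C$ in the finite topology; (iii) $\mathrm{Rat}^{\mathcal C}$ is an exact functor.
   Context: An $R$-coring is a triple $(\mathcal C,\Delta,\varepsilon)$ with $\mathcal C$ an $R$-bimodule and $\Delta:\mathcal C\to\mathcal C\otimes_R\mathcal C$, $\varepsilon:\mathcal C\to R$ coassociative and counital $R$-bimodule maps; write $\Delta(c)=c_{(1)}\otimes_R c_{(2)}$. ${}^*\mathcal C={}_R\mathrm{Hom}(\mathcal C,R)$ is a ring with product $(f\#g)(c)=g(c_{(1)}f(c_{(2)}))$ and unit $\varepsilon$. A right $\mathcal C$-comodule is a right $R$-module $N$ with a right $R$-linear coassociative counital map $N\to N\otimes_R\mathcal C$, $n\mapsto n_{[0]}\otimes n_{[1]}$; it is a right ${}^*\mathcal C$-module via $n\cdot f=n_{[0]}f(n_{[1]})$; in particular $\mathcal C$ is a right ${}^*\mathcal C$-module via $c\cdot f=c_{(1)}f(c_{(2)})$. $\mathcal C$ satisfies the left $\alpha$-condition if it is locally projective as a left $R$-module, equivalently for every right $R$-module $N$ the map $N\otimes_R\mathcal C\to\mathrm{Hom}_R({}^*\mathcal C,N)$, $n\otimes c\mapsto(f\mapsto nf(c))$, is injective; then the category $\mathcal M^{\mathcal C}$ of right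 comodules is a full subcategory of right ${}^*\mathcal C$-modules (equal to $\sigma[\mathcal C_{{}^*\mathcal C}]$). For a right ${}^*\mathcal C$-module $M$, $\mathrm{Rat}^{\mathcal C}(M)$ is the set of $m\in M$ for which there is $\sum_i m_i\otimes c_i\in M\otimes_R\mathcal C$ with $m\cdot f=\sum_i m_if(c_i)$ for all $f\in{}^*\mathcal C$; it is the largest ${}^*\mathcal C$-submodule of $M$ that is a right $\mathcal C$-comodule inducing the given action, and $\mathrm{Rat}^{\mathcal C}$ is a left exact functor from right ${}^*\mathcal C$-modules to $\mathcal M^{\mathcal C}$. Here ${}^*\mathcal C$ is regarded as a right module over itself. The finite topology on ${}^*\mathcal C={}_R\mathrm{Hom}(\mathcal C,R)$ has basic open sets $\{g\mid g(c)=f(c)\ \forall c\in F\}$, $F\subseteq\mathcal C$ finite. The $\mathcal C$-adic topology on ${}^*\mathcal C$ is the topology induced via $f\mapsto(c\mapsto c\cdot f)$ by the finite topology on $\mathrm{End}_{\mathbb Z}(\mathcal C)$; its basic open sets are $\{g\mid c\cdot g=c\cdot f\ \forall c\in F\}$, $F\subseteq\mathcal C$ finite. *)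

theory Defs
  imports Main
begin

text \<open>The R-bimodule C is a type 'c of class ab_group_add, with left action lm and right action rm.
Elements of tensor products over R are represented by finite formal sums (lists) modulo the
subgroup of the free abelian group generated by the usual (bi/tri)additivity and balancing
relations. The comultiplication is given as a function choosing, for each c, a representative
list of pairs (a,b) with Delta(c) = sum a \<otimes> b.\<close>

definition delta :: "'a \<Rightarrow> 'a \<Rightarrow> int" where
  "delta x = (\<lambda>p. if p = x then 1 else 0)"

definition fs :: "'a list \<Rightarrow> 'a \<Rightarrow> int" where
  "fs xs = (\<lambda>p. int (count_list xs p))"

definition bimodule :: "('r::ring_1 \<Rightarrow> 'c::ab_group_add \<Rightarrow> 'c) \<Rightarrow> ('c \<Rightarrow> 'r \<Rightarrow> 'c) \<Rightarrow> bool" where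
  "bimodule lm rm \<longleftrightarrow>
     (\<forall>r a b. lm r (a + b) = lm r a + lm r b) \<and>
     (\<forall>r s a. lm (r + s) a = lm r a + lm s a) \<and>
     (\<forall>r s a. lm (r * s) a = lm r (lm s a)) \<and>
     (\<forall>a. lm 1 a = a) \<and>
     (\<forall>r a b. rm (a + b) r = rm a r + rm b r) \<and>
     (\<forall>r s a. rm a (r + s) = rm a r + rm a s) \<and>
     (\<forall>r s a. rm a (r * s) = rm (rm a r) s) \<and>
     (\<forall>a. rm a 1 = a) \<and>
     (\<forall>r s a. rm (lm r a) s = lm r (rm a s))"

inductive_set tens2_rel :: "('r::ring_1 \<Rightarrow> 'c::ab_group_add \<Rightarrow> 'c) \<Rightarrow> ('c \<Rightarrow> 'r \<Rightarrow> 'c)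
    \<Rightarrow> ('c \<times> 'c \<Rightarrow> int) set" for lm rm where
  t2_zero: "(\<lambda>p. 0) \<in> tens2_rel lm rm"
| t2_add1: "(\<lambda>p. delta (a + a', b) p - delta (a, b) p - delta (a', b) p) \<in> tens2_rel lm rm"
| t2_add2: "(\<lambda>p. delta (a, b + b') p - delta (a, b) p - delta (a, b') p) \<in> tens2_rel lm rm"
| t2_bal: "(\<lambda>p. delta (rm a r, b) p - delta (a, lm r b) p) \<in> tens2_rel lm rm"
| t2_plus: "u \<in> tens2_rel lm rm \<Longrightarrow> v \<in> tens2_rel lm rm \<Longrightarrow> (\<lambda>p. u p + v p) \<in> tens2_rel lm rm"
| t2_neg: "u \<in> tens2_rel lm rm \<Longrightarrow> (\<lambda>p. - u p) \<in> tens2_rel lm rm"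

inductive_set tens3_rel :: "('r::ring_1 \<Rightarrow> 'c::ab_group_add \<Rightarrow> 'c) \<Rightarrow> ('c \<Rightarrow> 'r \<Rightarrow> 'c)
    \<Rightarrow> ('c \<times> 'c \<times> 'c \<Rightarrow> int) set" for lm rm where
  t3_zero: "(\<lambda>p. 0) \<in> tens3_rel lm rm"
| t3_add1: "(\<lambda>p. delta (a + a', b, c) p - delta (a, b, c) p - delta (a', b, c) p) \<in> tens3_rel lm rm"
| t3_add2: "(\<lambda>p. delta (a, b + b', c) p - delta (a, b, c) p - delta (a, b', c) p) \<in> tens3_rel lm rm"
| t3_add3: "(\<lambda>p. delta (a, b, c + c') p - delta (a, b, c) p - delta (a, b, c') p) \<in> tens3_rel lm rm"
| t3_bal1: "(\<lambda>p. delta (rm a r, b, c) p - delta (a, lm r b, c) p) \<in> tens3_rel lm rm"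
| t3_bal2: "(\<lambda>p. delta (a, rm b r, c) p - delta (a, b, lm r c) p) \<in> tens3_rel lm rm"
| t3_plus: "u \<in> tens3_rel lm rm \<Longrightarrow> v \<in> tens3_rel lm rm \<Longrightarrow> (\<lambda>p. u p + v p) \<in> tens3_rel lm rm"
| t3_neg: "u \<in> tens3_rel lm rm \<Longrightarrow> (\<lambda>p. - u p) \<in> tens3_rel lm rm"

definition teq2 :: "('r::ring_1 \<Rightarrow> 'c::ab_group_add \<Rightarrow> 'c) \<Rightarrow> ('c \<Rightarrow> 'r \<Rightarrow> 'c)
    \<Rightarrow> ('c \<times> 'c) list \<Rightarrow> ('c \<times> 'c) list \<Rightarrow> bool" where
  "teq2 lm rm xs ys \<longleftrightarrow> (\<lambda>p. fs xs p - fs ys p) \<in> tens2_rel lm rm"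

definition teq3 :: "('r::ring_1 \<Rightarrow> 'c::ab_group_add \<Rightarrow> 'c) \<Rightarrow> ('c \<Rightarrow> 'r \<Rightarrow> 'c)
    \<Rightarrow> ('c \<times> 'c \<times> 'c) list \<Rightarrow> ('c \<times> 'c \<times> 'c) list \<Rightarrow> bool" where
  "teq3 lm rm xs ys \<longleftrightarrow> (\<lambda>p. fs xs p - fs ys p) \<in> tens3_rel lm rm"

definition coring :: "('r::ring_1 \<Rightarrow> 'c::ab_group_add \<Rightarrow> 'c) \<Rightarrow> ('c \<Rightarrow> 'r \<Rightarrow> 'c)
    \<Rightarrow> ('c \<Rightarrow> ('c \<times> 'c) list) \<Rightarrow> ('c \<Rightarrow> 'r) \<Rightarrow> bool" where
  "coring lm rm Dl eps \<longleftrightarrow>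
     bimodule lm rm \<and>
     \<comment> \<open>Delta is an R-bimodule map C \<rightarrow> C \<otimes>_R C\<close>
     (\<forall>c d. teq2 lm rm (Dl (c + d)) (Dl c @ Dl d)) \<and>
     (\<forall>r c. teq2 lm rm (Dl (lm r c)) (map (\<lambda>(a, b). (lm r a, b)) (Dl c))) \<and>
     (\<forall>r c. teq2 lm rm (Dl (rm c r)) (map (\<lambda>(a, b). (a, rm b r)) (Dl c))) \<and>
     \<comment> \<open>eps is an R-bimodule map C \<rightarrow> R\<close>
     (\<forall>c d. eps (c + d) = eps c + eps d) \<and>
     (\<forall>r c. eps (lm r c) = r * eps c) \<and>
     (\<forall>r c. eps (rm c r) = eps c * r) \<and>
     \<comment> \<open>coassociativity: (Delta \<otimes> C) o Delta = (C \<otimes> Delta) o Delta\<close>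
     (\<forall>c. teq3 lm rm
        (concat (map (\<lambda>(a, b). map (\<lambda>(x, y). (x, y, b)) (Dl a)) (Dl c)))
        (concat (map (\<lambda>(a, b). map (\<lambda>(x, y). (a, x, y)) (Dl b)) (Dl c)))) \<and>
     \<comment> \<open>counitality\<close>
     (\<forall>c. sum_list (map (\<lambda>(a, b). lm (eps a) b) (Dl c)) = c) \<and>
     (\<forall>c. sum_list (map (\<lambda>(a, b). rm a (eps b)) (Dl c)) = c)"

definition ldual :: "('r::ring_1 \<Rightarrow> 'c::ab_group_add \<Rightarrow> 'c) \<Rightarrow> ('c \<Rightarrow> 'r) set" where
  "ldual lm = {f. (\<forall>a b. f (a + b) = f a + f b) \<and> (\<forall>r a. f (lm r a) = r * f a)}"

definition cact :: "('c::ab_group_add \<Rightarrow> 'r::ring_1 \<Rightarrow> 'c) \<Rightarrow> ('c \<Rightarrow> ('c \<times> 'c) list)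
    \<Rightarrow> 'c \<Rightarrow> ('c \<Rightarrow> 'r) \<Rightarrow> 'c" where
  "cact rm Dl c f = sum_list (map (\<lambda>(a, b). rm a (f b)) (Dl c))"

definition conv :: "('c::ab_group_add \<Rightarrow> 'r::ring_1 \<Rightarrow> 'c) \<Rightarrow> ('c \<Rightarrow> ('c \<times> 'c) list)
    \<Rightarrow> ('c \<Rightarrow> 'r) \<Rightarrow> ('c \<Rightarrow> 'r) \<Rightarrow> ('c \<Rightarrow> 'r)" where
  "conv rm Dl f g = (\<lambda>c. g (cact rm Dl c f))"

text \<open>Left alpha-condition: C is locally projective as a left R-module
  (dual basis characterisation of local projectivity, Zimmermann-Huisgen).\<close>
definition left_alpha :: "('r::ring_1 \<Rightarrow> 'c::ab_group_add \<Rightarrow> 'c) \<Rightarrow> bool" where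
  "left_alpha lm \<longleftrightarrow>
     (\<forall>F. finite F \<longrightarrow> (\<exists>ps :: (('c \<Rightarrow> 'r) \<times> 'c) list.
        (\<forall>(f, d) \<in> set ps. f \<in> ldual lm) \<and>
        (\<forall>c \<in> F. c = sum_list (map (\<lambda>(f, d). lm (f c) d) ps))))"

record ('m, 'c, 'r) rmod =
  mcarrier :: "'m set"
  madd :: "'m \<Rightarrow> 'm \<Rightarrow> 'm"
  mzero :: 'm
  mneg :: "'m \<Rightarrow> 'm"
  mact :: "'m \<Rightarrow> ('c \<Rightarrow> 'r) \<Rightarrow> 'm"

definition rmodule :: "('r::ring_1 \<Rightarrow> 'c::ab_group_add \<Rightarrow> 'c) \<Rightarrow> ('c \<Rightarrow> 'r \<Rightarrow> 'c)
    \<Rightarrow> ('c \<Rightarrow> ('c \<times> 'c) list) \<Rightarrow> ('c \<Rightarrow> 'r) \<Rightarrow> ('m, 'c, 'r) rmod \<Rightarrow> bool" where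
  "rmodule lm rm Dl eps M \<longleftrightarrow>
     mzero M \<in> mcarrier M \<and>
     (\<forall>x \<in> mcarrier M. \<forall>y \<in> mcarrier M. madd M x y \<in> mcarrier M) \<and>
     (\<forall>x \<in> mcarrier M. mneg M x \<in> mcarrier M) \<and>
     (\<forall>x \<in> mcarrier M. \<forall>y \<in> mcarrier M. \<forall>z \<in> mcarrier M.
        madd M (madd M x y) z = madd M x (madd M y z)) \<and>
     (\<forall>x \<in> mcarrier M. \<forall>y \<in> mcarrier M. madd M x y = madd M y x) \<and>
     (\<forall>x \<in> mcarrier M. madd M (mzero M) x = x) \<and>
     (\<forall>x \<in> mcarrier M. madd M (mneg M x) x = mzero M) \<and>
     (\<forall>x \<in> mcarrier M. \<forall>f \<in> ldual lm. mact M x f \<in> mcarrier M) \<and>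
     (\<forall>x \<in> mcarrier M. \<forall>y \<in> mcarrier M. \<forall>f \<in> ldual lm.
        mact M (madd M x y) f = madd M (mact M x f) (mact M y f)) \<and>
     (\<forall>x \<in> mcarrier M. \<forall>f \<in> ldual lm. \<forall>g \<in> ldual lm.
        mact M x (\<lambda>c. f c + g c) = madd M (mact M x f) (mact M x g)) \<and>
     (\<forall>x \<in> mcarrier M. \<forall>f \<in> ldual lm. \<forall>g \<in> ldual lm.
        mact M x (conv rm Dl f g) = mact M (mact M x f) g) \<and>
     (\<forall>x \<in> mcarrier M. mact M x eps = x)"

definition rmod_hom :: "('r::ring_1 \<Rightarrow> 'c::ab_group_add \<Rightarrow> 'c)
    \<Rightarrow> ('m, 'c, 'r) rmod \<Rightarrow> ('n, 'c, 'r) rmod \<Rightarrow> ('m \<Rightarrow> 'n) \<Rightarrow> bool" where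
  "rmod_hom lm M N h \<longleftrightarrow>
     (\<forall>x \<in> mcarrier M. h x \<in> mcarrier N) \<and>
     (\<forall>x \<in> mcarrier M. \<forall>y \<in> mcarrier M. h (madd M x y) = madd N (h x) (h y)) \<and>
     (\<forall>x \<in> mcarrier M. \<forall>f \<in> ldual lm. h (mact M x f) = mact N (h x) f)"

definition msum :: "('m, 'c, 'r) rmod \<Rightarrow> 'm list \<Rightarrow> 'm" where
  "msum M xs = foldr (madd M) xs (mzero M)"

text \<open>The right R-action on M is the one
  induced by the ring map R \<rightarrow> *C, r \<mapsto> eps(-) r.\<close>
definition Rat :: "('r::ring_1 \<Rightarrow> 'c::ab_group_add \<Rightarrow> 'c) \<Rightarrow> ('c \<Rightarrow> 'r)
    \<Rightarrow> ('m, 'c, 'r) rmod \<Rightarrow> 'm set" where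
  "Rat lm eps M = {m \<in> mcarrier M. \<exists>ps :: ('m \<times> 'c) list.
      (\<forall>(mi, ci) \<in> set ps. mi \<in> mcarrier M) \<and>
      (\<forall>f \<in> ldual lm. mact M m f =
          msum M (map (\<lambda>(mi, ci). mact M mi (\<lambda>c. eps c * f ci)) ps))}"

definition dual_rmod :: "('r::ring_1 \<Rightarrow> 'c::ab_group_add \<Rightarrow> 'c) \<Rightarrow> ('c \<Rightarrow> 'r \<Rightarrow> 'c)
    \<Rightarrow> ('c \<Rightarrow> ('c \<times> 'c) list) \<Rightarrow> ('c \<Rightarrow> 'r, 'c, 'r) rmod" where
  "dual_rmod lm rm Dl =
     \<lparr> mcarrier = ldual lm, madd = (\<lambda>f g c. f c + g c), mzero = (\<lambda>c. 0),
       mneg = (\<lambda>f c. - f c), mact = conv rm Dl \<rparr>"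

text \<open>Density of a subset S of *C in the finite topology: every basic open set
  {g. \<forall>c\<in>F. g c = f c} (f in *C, F finite) meets S.\<close>
definition dense_finite_top :: "('r::ring_1 \<Rightarrow> 'c::ab_group_add \<Rightarrow> 'c) \<Rightarrow> ('c \<Rightarrow> 'r) set \<Rightarrow> bool" where
  "dense_finite_top lm S \<longleftrightarrow>
     (\<forall>f \<in> ldual lm. \<forall>F. finite F \<longrightarrow> (\<exists>g \<in> S. \<forall>c \<in> F. g c = f c))"

text \<open>Density in the C-adic topology: every basic open set
  {g. \<forall>c\<in>F. c \<cdot> g = c \<cdot> f} (f in *C, F finite) meets S.\<close>
definition dense_Cadic_top :: "('r::ring_1 \<Rightarrow> 'c::ab_group_add \<Rightarrow> 'c) \<Rightarrow> ('c \<Rightarrow> 'r \<Rightarrow> 'c)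
    \<Rightarrow> ('c \<Rightarrow> ('c \<times> 'c) list) \<Rightarrow> ('c \<Rightarrow> 'r) set \<Rightarrow> bool" where
  "dense_Cadic_top lm rm Dl S \<longleftrightarrow>
     (\<forall>f \<in> ldual lm. \<forall>F. finite F \<longrightarrow> (\<exists>g \<in> S. \<forall>c \<in> F. cact rm Dl c g = cact rm Dl c f))"

text \<open>Exactness of Rat^C: for every short exact sequence 0 \<rightarrow> K \<rightarrow> M \<rightarrow> N \<rightarrow> 0 of right
  *C-modules (carriers in the types 'k, 'm, 'n), the induced sequence
  0 \<rightarrow> Rat(K) \<rightarrow> Rat(M) \<rightarrow> Rat(N) \<rightarrow> 0 is exact.\<close>
definition Rat_exact :: "('r::ring_1 \<Rightarrow> 'c::ab_group_add \<Rightarrow> 'c) \<Rightarrow> ('c \<Rightarrow> 'r \<Rightarrow> 'c)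
    \<Rightarrow> ('c \<Rightarrow> ('c \<times> 'c) list) \<Rightarrow> ('c \<Rightarrow> 'r) \<Rightarrow> 'k itself \<Rightarrow> 'm itself \<Rightarrow> 'n itself \<Rightarrow> bool" where
  "Rat_exact lm rm Dl eps (tk :: 'k itself) (tm :: 'm itself) (tn :: 'n itself) \<longleftrightarrow>
     (\<forall>(K :: ('k, 'c, 'r) rmod) (M :: ('m, 'c, 'r) rmod) (N :: ('n, 'c, 'r) rmod) u v.
        rmodule lm rm Dl eps K \<and> rmodule lm rm Dl eps M \<and> rmodule lm rm Dl eps N \<and>
        rmod_hom lm K M u \<and> rmod_hom lm M N v \<and>
        inj_on u (mcarrier K) \<and>
        u ` mcarrier K = {x \<in> mcarrier M. v x = mzero N} \<and>
        v ` mcarrier M = mcarrier N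
      \<longrightarrow>
        inj_on u (Rat lm eps K) \<and>
        u ` Rat lm eps K = {x \<in> Rat lm eps M. v x = mzero N} \<and>
        v ` Rat lm eps M = Rat lm eps N)"

end

theory Submission
  imports Defs
begin



lemma sum_list_swap:
  fixes F :: "'a \<Rightarrow> 'b \<Rightarrow> 'c::comm_monoid_add"
  shows "sum_list (map (\<lambda>x. sum_list (map (F x) ys)) xs) = sum_list (map (\<lambda>y. sum_list (map (\<lambda>x. F x y) xs)) ys)"
  by (induction xs) (simp_all add: sum_list_addf)

lemma sum_list_concat_map:
  "sum_list (map f (concat xss)) = sum_list (map (\<lambda>xs. sum_list (map f xs)) xss)"
  by (induction xss) simp_all

definition Lin :: "('r::ring_1 \<Rightarrow> 'c::ab_group_add \<Rightarrow> 'c) \<Rightarrow> ('p \<Rightarrow> 'c) \<Rightarrow> ('p \<Rightarrow> int) \<Rightarrow> 'c" where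
  "Lin lm \<phi> u = (\<Sum>p\<in>{p. u p \<noteq> 0}. lm (of_int (u p)) (\<phi> p))"

locale bim =
  fixes lm :: "'r::ring_1 \<Rightarrow> 'c::ab_group_add \<Rightarrow> 'c"
    and rm :: "'c \<Rightarrow> 'r \<Rightarrow> 'c"
  assumes bim: "bimodule lm rm"
begin

lemma lm_add: "lm r (a + b) = lm r a + lm r b" using bim unfolding bimodule_def by auto
lemma lm_radd: "lm (r + s) a = lm r a + lm s a" using bim unfolding bimodule_def by blast
lemma lm_mult: "lm (r * s) a = lm r (lm s a)" using bim unfolding bimodule_def by blast
lemma lm_one[simp]: "lm 1 a = a" using bim unfolding bimodule_def by blast
lemma rm_add: "rm (a + b) r = rm a r + rm b r" using bim unfolding bimodule_def by blast
lemma rm_radd: "rm a (r + s) = rm a r + rm a s" using bim unfolding bimodule_def by blast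
lemma rm_mult: "rm a (r * s) = rm (rm a r) s" using bim unfolding bimodule_def by blast
lemma rm_one[simp]: "rm a 1 = a" using bim unfolding bimodule_def by blast
lemma lm_rm: "rm (lm r a) s = lm r (rm a s)" using bim unfolding bimodule_def by blast

lemma lm_zero_r[simp]: "lm 0 a = 0"
  using lm_radd[of 0 0 a] by simp
lemma lm_zero[simp]: "lm r 0 = 0"
  using lm_add[of r 0 0] by simp
lemma rm_zero_r[simp]: "rm a 0 = 0"
  using rm_radd[of a 0 0] by simp
lemma rm_zero[simp]: "rm 0 r = 0"
  using rm_add[of 0 0 r] by simp
lemma lm_rneg: "lm (- r) a = - lm r a"
  using lm_radd[of r "-r" a] by (simp add: eq_neg_iff_add_eq_0 add.commute)
lemma rm_rneg: "rm a (- r) = - rm a r"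
  using rm_radd[of a r "-r"] by (simp add: eq_neg_iff_add_eq_0 add.commute)
lemma rm_neg: "rm (- a) r = - rm a r"
  using rm_add[of a "-a" r] by (simp add: eq_neg_iff_add_eq_0 add.commute)
lemma lm_neg: "lm r (- a) = - lm r a"
  using lm_add[of r a "-a"] by (simp add: eq_neg_iff_add_eq_0 add.commute)

lemma lm_sum_list: "lm r (sum_list xs) = sum_list (map (lm r) xs)"
  by (induction xs) (simp_all add: lm_add)
lemma rm_sum_list: "rm (sum_list xs) r = sum_list (map (\<lambda>x. rm x r) xs)"
  by (induction xs) (simp_all add: rm_add)
lemma rm_sum_list_r: "rm a (sum_list xs) = sum_list (map (rm a) xs)"
  by (induction xs) (simp_all add: rm_radd)

lemma Lin_eq:
  assumes "finite S" "{p. u p \<noteq> 0} \<subseteq> S"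
  shows "Lin lm \<phi> u = (\<Sum>p\<in>S. lm (of_int (u p)) (\<phi> p))"
  unfolding Lin_def
  by (rule sum.mono_neutral_left) (use assms in auto)

lemma Lin_add:
  assumes "finite {p. u p \<noteq> 0}" "finite {p. v p \<noteq> 0}"
  shows "Lin lm \<phi> (\<lambda>p. u p + v p) = Lin lm \<phi> u + Lin lm \<phi> v"
proof -
  let ?S = "{p. u p \<noteq> 0} \<union> {p. v p \<noteq> 0}"
  have "Lin lm \<phi> (\<lambda>p. u p + v p) = (\<Sum>p\<in>?S. lm (of_int (u p + v p)) (\<phi> p))"
    by (rule Lin_eq) (use assms in auto)
  also have "\<dots> = (\<Sum>p\<in>?S. lm (of_int (u p)) (\<phi> p)) + (\<Sum>p\<in>?S. lm (of_int (v p)) (\<phi> p))"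
    by (simp add: lm_radd sum.distrib)
  also have "\<dots> = Lin lm \<phi> u + Lin lm \<phi> v"
    using Lin_eq[of ?S u \<phi>] Lin_eq[of ?S v \<phi>] assms by auto
  finally show ?thesis .
qed

lemma Lin_neg:
  shows "Lin lm \<phi> (\<lambda>p. - u p) = - Lin lm \<phi> u"
  unfolding Lin_def by (simp add: lm_rneg sum_negf)

lemma Lin_diff:
  assumes "finite {p. u p \<noteq> 0}" "finite {p. v p \<noteq> 0}"
  shows "Lin lm \<phi> (\<lambda>p. u p - v p) = Lin lm \<phi> u - Lin lm \<phi> v"
  using Lin_add[of u "\<lambda>p. - v p" \<phi>] Lin_neg[of \<phi> v] assms by simp

lemma delta_fin: "finite {p. delta x p \<noteq> 0}"
  by (rule finite_subset[of _ "{x}"]) (auto simp: delta_def)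

lemma Lin_delta: "Lin lm \<phi> (delta x) = \<phi> x"
  by (subst Lin_eq[of "{x}"]) (auto simp: delta_def)

lemma Lin_d3: "Lin lm \<phi> (\<lambda>p. delta X p - delta Y p - delta Z p) = \<phi> X - \<phi> Y - \<phi> Z"
proof -
  have f: "finite {p. delta X p - delta Y p \<noteq> 0}"
    by (rule finite_subset[of _ "{X,Y}"]) (auto simp: delta_def)
  have "Lin lm \<phi> (\<lambda>p. delta X p - delta Y p - delta Z p) = Lin lm \<phi> (\<lambda>p. delta X p - delta Y p) - Lin lm \<phi> (delta Z)"
    using Lin_diff[OF f delta_fin[of Z], of \<phi>] by simp
  also have "\<dots> = \<phi> X - \<phi> Y - \<phi> Z"
    using Lin_diff[OF delta_fin[of X] delta_fin[of Y], of \<phi>] by (simp add: Lin_delta)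
  finally show ?thesis .
qed

lemma Lin_d2: "Lin lm \<phi> (\<lambda>p. delta X p - delta Y p) = \<phi> X - \<phi> Y"
  using Lin_diff[OF delta_fin[of X] delta_fin[of Y], of \<phi>] by (simp add: Lin_delta)

lemma fin_d3: "finite {p. delta X p - delta Y p - delta Z p \<noteq> 0}"
  by (rule finite_subset[of _ "{X,Y,Z}"]) (auto simp: delta_def)
lemma fin_d2: "finite {p. delta X p - delta Y p \<noteq> 0}"
  by (rule finite_subset[of _ "{X,Y}"]) (auto simp: delta_def)

lemma fs_fin: "finite {p. fs xs p \<noteq> 0}"
  by (rule finite_subset[of _ "set xs"]) (auto simp: fs_def count_list_0_iff)

lemma Lin_fs: "Lin lm \<phi> (fs xs) = sum_list (map \<phi> xs)"
proof (induction xs)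
  case Nil
  then show ?case by (simp add: Lin_def fs_def)
next
  case (Cons x xs)
  have "fs (x # xs) = (\<lambda>p. delta x p + fs xs p)"
    by (auto simp: fs_def delta_def)
  then show ?case using Lin_add[OF delta_fin[of x] fs_fin[of xs], of \<phi>] Cons
    by (simp add: Lin_delta)
qed

lemma Lin_teq:
  assumes "finite {p. (\<lambda>p. fs xs p - fs ys p) p \<noteq> 0} \<and> Lin lm \<phi> (\<lambda>p. fs xs p - fs ys p) = 0"
  shows "sum_list (map \<phi> xs) = sum_list (map \<phi> ys)"
  using conjunct2[OF assms] Lin_diff[OF fs_fin[of xs] fs_fin[of ys], of \<phi>] by (simp add: Lin_fs)

lemma tens2_Lin:
  assumes "u \<in> tens2_rel lm rm"
    and a1: "\<And>a a' b. \<phi> (a + a', b) = \<phi> (a, b) + \<phi> (a', b)"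
    and a2: "\<And>a b b'. \<phi> (a, b + b') = \<phi> (a, b) + \<phi> (a, b')"
    and a3: "\<And>a r b. \<phi> (rm a r, b) = \<phi> (a, lm r b)"
  shows "finite {p. u p \<noteq> 0} \<and> Lin lm \<phi> u = 0"
  using assms(1)
proof (induction rule: tens2_rel.induct)
  case t2_zero then show ?case by (simp add: Lin_def)
next
  case (t2_add1 a a' b) show ?case by (intro conjI fin_d3) (simp add: Lin_d3 a1)
next
  case (t2_add2 a b b') show ?case by (intro conjI fin_d3) (simp add: Lin_d3 a2)
next
  case (t2_bal a r b) show ?case by (intro conjI fin_d2) (simp add: Lin_d2 a3)
next
  case (t2_plus u v)
  have fin: "finite {p. u p + v p \<noteq> 0}"
    by (rule finite_subset[of _ "{p. u p \<noteq> 0} \<union> {p. v p \<noteq> 0}"]) (use t2_plus in auto)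
  then show ?case using Lin_add[of u v \<phi>] t2_plus by auto
next
  case (t2_neg u) then show ?case using Lin_neg[of \<phi> u] by simp
qed

lemma tens3_Lin:
  assumes "u \<in> tens3_rel lm rm"
    and a1: "\<And>a a' b c. \<phi> (a + a', b, c) = \<phi> (a, b, c) + \<phi> (a', b, c)"
    and a2: "\<And>a b b' c. \<phi> (a, b + b', c) = \<phi> (a, b, c) + \<phi> (a, b', c)"
    and a3: "\<And>a b c c'. \<phi> (a, b, c + c') = \<phi> (a, b, c) + \<phi> (a, b, c')"
    and a4: "\<And>a r b c. \<phi> (rm a r, b, c) = \<phi> (a, lm r b, c)"
    and a5: "\<And>a r b c. \<phi> (a, rm b r, c) = \<phi> (a, b, lm r c)"
  shows "finite {p. u p \<noteq> 0} \<and> Lin lm \<phi> u = 0"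
  using assms(1)
proof (induction rule: tens3_rel.induct)
  case t3_zero then show ?case by (simp add: Lin_def)
next
  case (t3_add1 a a' b c) show ?case by (intro conjI fin_d3) (simp add: Lin_d3 a1)
next
  case (t3_add2 a b b' c) show ?case by (intro conjI fin_d3) (simp add: Lin_d3 a2)
next
  case (t3_add3 a b c c') show ?case by (intro conjI fin_d3) (simp add: Lin_d3 a3)
next
  case (t3_bal1 a r b c) show ?case by (intro conjI fin_d2) (simp add: Lin_d2 a4)
next
  case (t3_bal2 a b r c) show ?case by (intro conjI fin_d2) (simp add: Lin_d2 a5)
next
  case (t3_plus u v)
  have fin: "finite {p. u p + v p \<noteq> 0}"
    by (rule finite_subset[of _ "{p. u p \<noteq> 0} \<union> {p. v p \<noteq> 0}"]) (use t3_plus in auto)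
  then show ?case using Lin_add[of u v \<phi>] t3_plus by auto
next
  case (t3_neg u) then show ?case using Lin_neg[of \<phi> u] by simp
qed

lemma teq2_sum:
  fixes \<phi> :: "'c \<times> 'c \<Rightarrow> 'c"
  assumes "teq2 lm rm xs ys"
    and "\<And>a a' b. \<phi> (a + a', b) = \<phi> (a, b) + \<phi> (a', b)"
    and "\<And>a b b'. \<phi> (a, b + b') = \<phi> (a, b) + \<phi> (a, b')"
    and "\<And>a r b. \<phi> (rm a r, b) = \<phi> (a, lm r b)"
  shows "sum_list (map \<phi> xs) = sum_list (map \<phi> ys)"
  using assms tens2_Lin[of "\<lambda>p. fs xs p - fs ys p" \<phi>] Lin_teq[of xs ys \<phi>] unfolding teq2_def by blast

lemma teq3_sum:
  fixes \<phi> :: "'c \<times> 'c \<times> 'c \<Rightarrow> 'c"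
  assumes "teq3 lm rm xs ys"
    and "\<And>a a' b c. \<phi> (a + a', b, c) = \<phi> (a, b, c) + \<phi> (a', b, c)"
    and "\<And>a b b' c. \<phi> (a, b + b', c) = \<phi> (a, b, c) + \<phi> (a, b', c)"
    and "\<And>a b c c'. \<phi> (a, b, c + c') = \<phi> (a, b, c) + \<phi> (a, b, c')"
    and "\<And>a r b c. \<phi> (rm a r, b, c) = \<phi> (a, lm r b, c)"
    and "\<And>a r b c. \<phi> (a, rm b r, c) = \<phi> (a, b, lm r c)"
  shows "sum_list (map \<phi> xs) = sum_list (map \<phi> ys)"
  using assms tens3_Lin[of "\<lambda>p. fs xs p - fs ys p" \<phi>] Lin_teq[of xs ys \<phi>] unfolding teq3_def by blast

end




lemma sum_list_negf2: "sum_list (map (\<lambda>x. - f x) xs) = - sum_list (map f xs :: 'a::ab_group_add list)"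
  by (induction xs) simp_all

lemma sum_list_cong: "(\<And>x. x \<in> set xs \<Longrightarrow> f x = g x) \<Longrightarrow> sum_list (map f xs) = sum_list (map g xs)"
  by (metis map_cong)

lemma ldual_add: "f \<in> ldual lm \<Longrightarrow> f (a + b) = f a + f b" unfolding ldual_def by blast
lemma ldual_lm: "f \<in> ldual lm \<Longrightarrow> f (lm r a) = r * f a" unfolding ldual_def by blast
lemma ldual_zero: "f \<in> ldual lm \<Longrightarrow> f 0 = 0" using ldual_add[of f lm 0 0] by simp
lemma ldual_neg: "f \<in> ldual lm \<Longrightarrow> f (- a) = - f a"
  using ldual_add[of f lm a "-a"] ldual_zero[of f lm] by (simp add: eq_neg_iff_add_eq_0 add.commute)
lemma ldual_sum_list: "f \<in> ldual lm \<Longrightarrow> f (sum_list xs) = sum_list (map f xs)"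
  by (induction xs) (simp_all add: ldual_add ldual_zero)
lemma zero_ldual: "(\<lambda>c. 0) \<in> ldual lm" unfolding ldual_def by simp
lemma add_ldual: "f \<in> ldual lm \<Longrightarrow> g \<in> ldual lm \<Longrightarrow> (\<lambda>c. f c + g c) \<in> ldual lm"
  unfolding ldual_def by (simp add: algebra_simps)
lemma neg_ldual: "f \<in> ldual lm \<Longrightarrow> (\<lambda>c. - f c) \<in> ldual lm"
  unfolding ldual_def by simp

locale cor =
  fixes lm :: "'r::ring_1 \<Rightarrow> 'c::ab_group_add \<Rightarrow> 'c"
    and rm :: "'c \<Rightarrow> 'r \<Rightarrow> 'c"
    and Dl :: "'c \<Rightarrow> ('c \<times> 'c) list"
    and eps :: "'c \<Rightarrow> 'r"
  assumes cor: "coring lm rm Dl eps"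
begin

sublocale bim lm rm
  using cor unfolding coring_def by unfold_locales blast

lemma Dl_add: "teq2 lm rm (Dl (c + d)) (Dl c @ Dl d)" using cor unfolding coring_def by blast
lemma Dl_lm: "teq2 lm rm (Dl (lm r c)) (map (\<lambda>(a, b). (lm r a, b)) (Dl c))" using cor unfolding coring_def by blast
lemma Dl_rm: "teq2 lm rm (Dl (rm c r)) (map (\<lambda>(a, b). (a, rm b r)) (Dl c))" using cor unfolding coring_def by blast
lemma eps_add: "eps (c + d) = eps c + eps d" using cor unfolding coring_def by blast
lemma eps_lm: "eps (lm r c) = r * eps c" using cor unfolding coring_def by blast
lemma eps_rm: "eps (rm c r) = eps c * r" using cor unfolding coring_def by blast
lemma coassoc: "teq3 lm rm
        (concat (map (\<lambda>(a, b). map (\<lambda>(x, y). (x, y, b)) (Dl a)) (Dl c)))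
        (concat (map (\<lambda>(a, b). map (\<lambda>(x, y). (a, x, y)) (Dl b)) (Dl c)))" using cor unfolding coring_def by blast
lemma counit_l: "sum_list (map (\<lambda>(a, b). lm (eps a) b) (Dl c)) = c" using cor unfolding coring_def by blast
lemma counit_r: "sum_list (map (\<lambda>(a, b). rm a (eps b)) (Dl c)) = c" using cor unfolding coring_def by blast

lemma eps_ldual: "eps \<in> ldual lm"
  unfolding ldual_def by (simp add: eps_add eps_lm)

lemma epsr_ldual: "(\<lambda>c. eps c * r) \<in> ldual lm"
  unfolding ldual_def by (simp add: eps_add eps_lm algebra_simps)

lemma eps_sum_list: "eps (sum_list xs) = sum_list (map eps xs)"
  using ldual_sum_list[OF eps_ldual] .

lemma cact_add:
  assumes g: "g \<in> ldual lm"
  shows "cact rm Dl (c + d) g = cact rm Dl c g + cact rm Dl d g"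
proof -
  have "cact rm Dl (c + d) g = sum_list (map (\<lambda>(a, b). rm a (g b)) (Dl c @ Dl d))"
    unfolding cact_def
    by (rule teq2_sum[OF Dl_add]) (simp_all add: rm_add rm_radd ldual_add[OF g] ldual_lm[OF g] rm_mult[symmetric])
  then show ?thesis by (simp add: cact_def)
qed

lemma cact_zero: "g \<in> ldual lm \<Longrightarrow> cact rm Dl 0 g = 0"
  using cact_add[of g 0 0] by simp

lemma cact_sum_list: "g \<in> ldual lm \<Longrightarrow> cact rm Dl (sum_list xs) g = sum_list (map (\<lambda>x. cact rm Dl x g) xs)"
  by (induction xs) (simp_all add: cact_add cact_zero)

lemma cact_lm:
  assumes g: "g \<in> ldual lm"
  shows "cact rm Dl (lm r c) g = lm r (cact rm Dl c g)"
proof -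
  have "cact rm Dl (lm r c) g = sum_list (map (\<lambda>(a, b). rm a (g b)) (map (\<lambda>(a, b). (lm r a, b)) (Dl c)))"
    unfolding cact_def
    by (rule teq2_sum[OF Dl_lm]) (simp_all add: rm_add rm_radd ldual_add[OF g] ldual_lm[OF g] rm_mult[symmetric])
  also have "\<dots> = sum_list (map (lm r) (map (\<lambda>(a, b). rm a (g b)) (Dl c)))"
    by (simp add: case_prod_unfold o_def lm_rm)
  finally show ?thesis by (simp add: cact_def lm_sum_list)
qed

lemma cact_rm:
  assumes g: "g \<in> ldual lm"
  shows "cact rm Dl (rm c r) g = sum_list (map (\<lambda>(a, b). rm a (g (rm b r))) (Dl c))"
proof -
  have "cact rm Dl (rm c r) g = sum_list (map (\<lambda>(a, b). rm a (g b)) (map (\<lambda>(a, b). (a, rm b r)) (Dl c)))"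
    unfolding cact_def
    by (rule teq2_sum[OF Dl_rm]) (simp_all add: rm_add rm_radd ldual_add[OF g] ldual_lm[OF g] rm_mult[symmetric])
  then show ?thesis by (simp add: case_prod_unfold o_def)
qed

lemma cact_eps: "cact rm Dl c eps = c"
  unfolding cact_def using counit_r .

lemma cact_epsr: "cact rm Dl c (\<lambda>x. eps x * r) = rm c r"
proof -
  have "cact rm Dl c (\<lambda>x. eps x * r) = sum_list (map (\<lambda>x. rm x r) (map (\<lambda>(a, b). rm a (eps b)) (Dl c)))"
    unfolding cact_def by (simp add: case_prod_unfold o_def rm_mult)
  also have "\<dots> = rm (sum_list (map (\<lambda>(a, b). rm a (eps b)) (Dl c))) r" by (rule rm_sum_list[symmetric])
  also have "\<dots> = rm c r" by (simp only: counit_r)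
  finally show ?thesis .
qed

lemma cact_fadd: "cact rm Dl c (\<lambda>x. f x + g x) = cact rm Dl c f + cact rm Dl c g"
  unfolding cact_def by (simp add: case_prod_unfold rm_radd sum_list_addf)

lemma cact_fzero: "cact rm Dl c (\<lambda>x. 0) = 0"
  unfolding cact_def by (simp add: case_prod_unfold)

lemma cact_fneg: "cact rm Dl c (\<lambda>x. - f x) = - cact rm Dl c f"
  unfolding cact_def by (simp add: case_prod_unfold rm_rneg sum_list_negf2)

lemma eps_cact:
  assumes g: "g \<in> ldual lm"
  shows "eps (cact rm Dl c g) = g c"
proof -
  have "eps (cact rm Dl c g) = sum_list (map (\<lambda>(a, b). eps a * g b) (Dl c))"
    unfolding cact_def by (simp add: eps_sum_list case_prod_unfold o_def eps_rm)
  also have "\<dots> = sum_list (map g (map (\<lambda>(a, b). lm (eps a) b) (Dl c)))"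
    by (simp add: case_prod_unfold o_def ldual_lm[OF g])
  also have "\<dots> = g (sum_list (map (\<lambda>(a, b). lm (eps a) b) (Dl c)))" by (rule ldual_sum_list[OF g, symmetric])
  also have "\<dots> = g c" by (simp only: counit_l)
  finally show ?thesis .
qed

lemma conv_ldual:
  assumes f: "f \<in> ldual lm" and g: "g \<in> ldual lm"
  shows "conv rm Dl f g \<in> ldual lm"
  unfolding ldual_def conv_def
  by (simp add: cact_add[OF f] cact_lm[OF f] ldual_add[OF g] ldual_lm[OF g])

lemma coassoc_act:
  assumes f: "f \<in> ldual lm" and g: "g \<in> ldual lm"
  shows "cact rm Dl (cact rm Dl c f) g = cact rm Dl c (conv rm Dl f g)"
proof -
  define \<Psi> where "\<Psi> = (\<lambda>(x::'c, y::'c, z::'c). rm x (g (rm y (f z))))"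
  have "cact rm Dl (cact rm Dl c f) g = sum_list (map (\<lambda>(a, b). cact rm Dl (rm a (f b)) g) (Dl c))"
    unfolding cact_def[of rm Dl c f] by (simp add: cact_sum_list[OF g] o_def case_prod_unfold)
  also have "\<dots> = sum_list (map (\<lambda>(a, b). sum_list (map (\<lambda>(x, y). rm x (g (rm y (f b)))) (Dl a))) (Dl c))"
    by (simp add: cact_rm[OF g])
  also have "\<dots> = sum_list (map \<Psi> (concat (map (\<lambda>(a, b). map (\<lambda>(x, y). (x, y, b)) (Dl a)) (Dl c))))"
    by (simp add: sum_list_concat_map \<Psi>_def o_def case_prod_unfold)
  also have "\<dots> = sum_list (map \<Psi> (concat (map (\<lambda>(a, b). map (\<lambda>(x, y). (a, x, y)) (Dl b)) (Dl c))))"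
    by (rule teq3_sum[OF coassoc])
      (simp_all add: \<Psi>_def rm_add rm_radd ldual_add[OF g] ldual_add[OF f] ldual_lm[OF g] ldual_lm[OF f]
        rm_mult[symmetric] lm_rm)
  also have "\<dots> = sum_list (map (\<lambda>(a, b). sum_list (map (\<lambda>(x, y). rm a (g (rm x (f y)))) (Dl b))) (Dl c))"
    by (simp add: sum_list_concat_map \<Psi>_def o_def case_prod_unfold)
  also have "\<dots> = cact rm Dl c (conv rm Dl f g)"
    unfolding cact_def[of rm Dl c] conv_def cact_def[of rm Dl _ f]
    by (simp add: ldual_sum_list[OF g] rm_sum_list_r o_def case_prod_unfold)
  finally show ?thesis .
qed

end




context cor
begin

context
  fixes M :: "('m, 'c, 'r) rmod"
  assumes M: "rmodule lm rm Dl eps M"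
begin
lemma md_zero_in: "mzero M \<in> mcarrier M" using M unfolding rmodule_def by blast
lemma md_add_in: "x \<in> mcarrier M \<Longrightarrow> y \<in> mcarrier M \<Longrightarrow> madd M x y \<in> mcarrier M" using M unfolding rmodule_def by auto
lemma md_neg_in: "x \<in> mcarrier M \<Longrightarrow> mneg M x \<in> mcarrier M" using M unfolding rmodule_def by blast
lemma md_assoc: "x \<in> mcarrier M \<Longrightarrow> y \<in> mcarrier M \<Longrightarrow> z \<in> mcarrier M \<Longrightarrow> madd M (madd M x y) z = madd M x (madd M y z)" using M unfolding rmodule_def by blast
lemma md_comm: "x \<in> mcarrier M \<Longrightarrow> y \<in> mcarrier M \<Longrightarrow> madd M x y = madd M y x" using M unfolding rmodule_def by blast
lemma md_lzero: "x \<in> mcarrier M \<Longrightarrow> madd M (mzero M) x = x" using M unfolding rmodule_def by blast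
lemma md_linv: "x \<in> mcarrier M \<Longrightarrow> madd M (mneg M x) x = mzero M" using M unfolding rmodule_def by blast
lemma md_act_in: "x \<in> mcarrier M \<Longrightarrow> f \<in> ldual lm \<Longrightarrow> mact M x f \<in> mcarrier M" using M unfolding rmodule_def by blast
lemma md_act_add: "x \<in> mcarrier M \<Longrightarrow> y \<in> mcarrier M \<Longrightarrow> f \<in> ldual lm \<Longrightarrow> mact M (madd M x y) f = madd M (mact M x f) (mact M y f)" using M unfolding rmodule_def by blast
lemma md_act_fadd: "x \<in> mcarrier M \<Longrightarrow> f \<in> ldual lm \<Longrightarrow> g \<in> ldual lm \<Longrightarrow> mact M x (\<lambda>c. f c + g c) = madd M (mact M x f) (mact M x g)" using M unfolding rmodule_def by blast
lemma md_act_conv: "x \<in> mcarrier M \<Longrightarrow> f \<in> ldual lm \<Longrightarrow> g \<in> ldual lm \<Longrightarrow> mact M x (conv rm Dl f g) = mact M (mact M x f) g" using M unfolding rmodule_def by blast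
lemma md_act_eps: "x \<in> mcarrier M \<Longrightarrow> mact M x eps = x" using M unfolding rmodule_def by blast

lemma md_cancel:
  assumes x: "x \<in> mcarrier M" and e: "madd M x x = x"
  shows "x = mzero M"
proof -
  have "x = madd M (madd M (mneg M x) x) x" using md_linv[OF x] md_lzero[OF x] by simp
  also have "\<dots> = madd M (mneg M x) (madd M x x)" using md_assoc md_neg_in x by blast
  also have "\<dots> = mzero M" using e md_linv[OF x] by simp
  finally show ?thesis .
qed

lemma md_act_fzero:
  assumes x: "x \<in> mcarrier M" shows "mact M x (\<lambda>c. 0) = mzero M"
proof -
  have "madd M (mact M x (\<lambda>c. 0)) (mact M x (\<lambda>c. 0)) = mact M x (\<lambda>c. 0)"
    using md_act_fadd[OF x zero_ldual zero_ldual] by simp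
  then show ?thesis using md_cancel md_act_in[OF x zero_ldual] by blast
qed

lemma msum_in: "set xs \<subseteq> mcarrier M \<Longrightarrow> msum M xs \<in> mcarrier M"
  by (induction xs) (auto simp: msum_def md_zero_in md_add_in)

lemma act_msumf:
  assumes x: "x \<in> mcarrier M"
  shows "set gs \<subseteq> ldual lm \<Longrightarrow> mact M x (foldr (\<lambda>f g c. f c + g c) gs (\<lambda>c. 0)) = msum M (map (mact M x) gs)
    \<and> foldr (\<lambda>f g c. f c + g c) gs (\<lambda>c. 0) \<in> ldual lm"
proof (induction gs)
  case Nil then show ?case by (simp add: msum_def md_act_fzero[OF x] zero_ldual)
next
  case (Cons f gs)
  then show ?case by (simp add: msum_def md_act_fadd[OF x] add_ldual)
qed

end

lemma hom_zero:
  assumes M: "rmodule lm rm Dl eps M" and N: "rmodule lm rm Dl eps N" and h: "rmod_hom lm M N h"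
  shows "h (mzero M) = mzero N"
proof -
  have i: "h (mzero M) \<in> mcarrier N" using h md_zero_in[OF M] unfolding rmod_hom_def by blast
  have "h (mzero M) = h (madd M (mzero M) (mzero M))" using md_lzero[OF M md_zero_in[OF M]] by simp
  also have "\<dots> = madd N (h (mzero M)) (h (mzero M))" using h md_zero_in[OF M] unfolding rmod_hom_def by blast
  finally show ?thesis using md_cancel[OF N i] by simp
qed

lemma hom_msum:
  assumes M: "rmodule lm rm Dl eps M" and N: "rmodule lm rm Dl eps N" and h: "rmod_hom lm M N h"
  shows "set xs \<subseteq> mcarrier M \<Longrightarrow> h (msum M xs) = msum N (map h xs)"
proof (induction xs)
  case Nil then show ?case using hom_zero[OF M N h] by (simp add: msum_def)
next
  case (Cons x xs)
  have "h (msum M (x # xs)) = h (madd M x (msum M xs))" by (simp add: msum_def)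
  also have "\<dots> = madd N (h x) (h (msum M xs))"
    using h Cons.prems msum_in[OF M, of xs] unfolding rmod_hom_def by auto
  finally show ?case using Cons by (simp add: msum_def)
qed

lemma msum_dual: "msum (dual_rmod lm rm Dl) xs = foldr (\<lambda>f g c. f c + g c) xs (\<lambda>c. 0)"
  by (simp add: msum_def dual_rmod_def)

lemma Rat_dual_iff:
  "t \<in> Rat lm eps (dual_rmod lm rm Dl) \<longleftrightarrow> t \<in> ldual lm \<and> (\<exists>ps :: (('c \<Rightarrow> 'r) \<times> 'c) list.
      (\<forall>(mi, ci) \<in> set ps. mi \<in> ldual lm) \<and>
      (\<forall>f \<in> ldual lm. conv rm Dl t f =
          foldr (\<lambda>f g c. f c + g c) (map (\<lambda>(mi, ci). conv rm Dl mi (\<lambda>c. eps c * f ci)) ps) (\<lambda>c. 0)))"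
  unfolding Rat_def msum_dual by (simp add: dual_rmod_def)

lemma Rat_hom:
  assumes M: "rmodule lm rm Dl eps M" and N: "rmodule lm rm Dl eps N" and h: "rmod_hom lm M N h"
    and m: "m \<in> Rat lm eps M"
  shows "h m \<in> Rat lm eps N"
proof -
  obtain ps where mc: "m \<in> mcarrier M" and ps: "\<forall>(mi, ci) \<in> set ps. mi \<in> mcarrier M"
    and eq: "\<forall>f \<in> ldual lm. mact M m f = msum M (map (\<lambda>(mi, ci). mact M mi (\<lambda>c. eps c * f ci)) ps)"
    using m unfolding Rat_def by blast
  have hc: "\<And>x. x \<in> mcarrier M \<Longrightarrow> h x \<in> mcarrier N"
    and ha: "\<And>x f. x \<in> mcarrier M \<Longrightarrow> f \<in> ldual lm \<Longrightarrow> h (mact M x f) = mact N (h x) f"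
    using h unfolding rmod_hom_def by blast+
  let ?ps = "map (\<lambda>(mi, ci). (h mi, ci)) ps"
  have "\<forall>f \<in> ldual lm. mact N (h m) f = msum N (map (\<lambda>(mi, ci). mact N mi (\<lambda>c. eps c * f ci)) ?ps)"
  proof
    fix f assume f: "f \<in> ldual lm"
    have "mact N (h m) f = h (mact M m f)" using ha[OF mc f] by simp
    also have "\<dots> = h (msum M (map (\<lambda>(mi, ci). mact M mi (\<lambda>c. eps c * f ci)) ps))" using eq f by simp
    also have "\<dots> = msum N (map h (map (\<lambda>(mi, ci). mact M mi (\<lambda>c. eps c * f ci)) ps))"
      by (rule hom_msum[OF M N h]) (use ps md_act_in[OF M] epsr_ldual in auto)
    also have "map h (map (\<lambda>(mi, ci). mact M mi (\<lambda>c. eps c * f ci)) ps)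
        = map (\<lambda>(mi, ci). mact N mi (\<lambda>c. eps c * f ci)) ?ps"
      using ps ha epsr_ldual by (auto simp: case_prod_unfold)
    finally show "mact N (h m) f = msum N (map (\<lambda>(mi, ci). mact N mi (\<lambda>c. eps c * f ci)) ?ps)" .
  qed
  moreover have "\<forall>(mi, ci) \<in> set ?ps. mi \<in> mcarrier N" using ps hc by auto
  ultimately show ?thesis using hc[OF mc] unfolding Rat_def by blast
qed

lemma Rat_mult:
  assumes M: "rmodule lm rm Dl eps M" and x: "x \<in> mcarrier M"
    and t: "t \<in> Rat lm eps (dual_rmod lm rm Dl)"
  shows "mact M x t \<in> Rat lm eps M"
proof -
  obtain ps :: "(('c \<Rightarrow> 'r) \<times> 'c) list" where tl: "t \<in> ldual lm" and ps: "\<forall>(mi, ci) \<in> set ps. mi \<in> ldual lm"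
    and eq: "\<forall>f \<in> ldual lm. conv rm Dl t f =
          foldr (\<lambda>f g c. f c + g c) (map (\<lambda>(mi, ci). conv rm Dl mi (\<lambda>c. eps c * f ci)) ps) (\<lambda>c. 0)"
    using t unfolding Rat_dual_iff by blast
  let ?ps = "map (\<lambda>(ti, ci). (mact M x ti, ci)) ps"
  have "\<forall>f \<in> ldual lm. mact M (mact M x t) f = msum M (map (\<lambda>(mi, ci). mact M mi (\<lambda>c. eps c * f ci)) ?ps)"
  proof
    fix f assume f: "f \<in> ldual lm"
    have sub: "set (map (\<lambda>(mi, ci). conv rm Dl mi (\<lambda>c. eps c * f ci)) ps) \<subseteq> ldual lm"
      using ps conv_ldual epsr_ldual by auto
    have "mact M (mact M x t) f = mact M x (conv rm Dl t f)" using md_act_conv[OF M x tl f] by simp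
    also have "\<dots> = msum M (map (mact M x) (map (\<lambda>(mi, ci). conv rm Dl mi (\<lambda>c. eps c * f ci)) ps))"
      using eq f act_msumf[OF M x sub] by simp
    also have "map (mact M x) (map (\<lambda>(mi, ci). conv rm Dl mi (\<lambda>c. eps c * f ci)) ps)
       = map (\<lambda>(mi, ci). mact M mi (\<lambda>c. eps c * f ci)) ?ps"
      using ps md_act_conv[OF M x] epsr_ldual by (auto simp: case_prod_unfold)
    finally show "mact M (mact M x t) f = msum M (map (\<lambda>(mi, ci). mact M mi (\<lambda>c. eps c * f ci)) ?ps)" .
  qed
  moreover have "\<forall>(mi, ci) \<in> set ?ps. mi \<in> mcarrier M" using ps md_act_in[OF M x] by auto
  ultimately show ?thesis using md_act_in[OF M x tl] unfolding Rat_def by blast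
qed

lemma Rat_unit:
  assumes M: "rmodule lm rm Dl eps M" and m: "m \<in> Rat lm eps M"
    and d: "dense_finite_top lm (Rat lm eps (dual_rmod lm rm Dl))"
  shows "\<exists>t \<in> Rat lm eps (dual_rmod lm rm Dl). mact M m t = m"
proof -
  obtain ps where mc: "m \<in> mcarrier M" and ps: "\<forall>(mi, ci) \<in> set ps. mi \<in> mcarrier M"
    and eq: "\<forall>f \<in> ldual lm. mact M m f = msum M (map (\<lambda>(mi, ci). mact M mi (\<lambda>c. eps c * f ci)) ps)"
    using m unfolding Rat_def by blast
  obtain t where t: "t \<in> Rat lm eps (dual_rmod lm rm Dl)" and te: "\<forall>c \<in> snd ` set ps. t c = eps c"
    using d eps_ldual unfolding dense_finite_top_def by blast
  have tl: "t \<in> ldual lm" using t unfolding Rat_dual_iff by blast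
  have "mact M m t = msum M (map (\<lambda>(mi, ci). mact M mi (\<lambda>c. eps c * t ci)) ps)" using eq tl by blast
  also have "map (\<lambda>(mi, ci). mact M mi (\<lambda>c. eps c * t ci)) ps = map (\<lambda>(mi, ci). mact M mi (\<lambda>c. eps c * eps ci)) ps"
    using te by (auto simp: case_prod_unfold)
  also have "msum M \<dots> = mact M m eps" using eq eps_ldual by simp
  also have "\<dots> = m" using md_act_eps[OF M mc] .
  finally show ?thesis using t by blast
qed

theorem dense_exact:
  assumes d: "dense_finite_top lm (Rat lm eps (dual_rmod lm rm Dl))"
  shows "Rat_exact lm rm Dl eps TYPE('k) TYPE('m) TYPE('n)"
  unfolding Rat_exact_def
proof (intro allI impI)
  fix K :: "('k, 'c, 'r) rmod" and M :: "('m, 'c, 'r) rmod" and N :: "('n, 'c, 'r) rmod" and u v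
  assume A: "rmodule lm rm Dl eps K \<and> rmodule lm rm Dl eps M \<and> rmodule lm rm Dl eps N \<and>
        rmod_hom lm K M u \<and> rmod_hom lm M N v \<and>
        inj_on u (mcarrier K) \<and>
        u ` mcarrier K = {x \<in> mcarrier M. v x = mzero N} \<and>
        v ` mcarrier M = mcarrier N"
  then have K: "rmodule lm rm Dl eps K" and M: "rmodule lm rm Dl eps M" and N: "rmodule lm rm Dl eps N"
    and u: "rmod_hom lm K M u" and v: "rmod_hom lm M N v" and inj: "inj_on u (mcarrier K)"
    and ker: "u ` mcarrier K = {x \<in> mcarrier M. v x = mzero N}" and surj: "v ` mcarrier M = mcarrier N"
    by auto
  have RK: "Rat lm eps K \<subseteq> mcarrier K" and RM: "Rat lm eps M \<subseteq> mcarrier M" and RN: "Rat lm eps N \<subseteq> mcarrier N"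
    unfolding Rat_def by auto
  have Tl: "\<And>t. t \<in> Rat lm eps (dual_rmod lm rm Dl) \<Longrightarrow> t \<in> ldual lm" unfolding Rat_dual_iff by blast
  have uact: "\<And>x f. x \<in> mcarrier K \<Longrightarrow> f \<in> ldual lm \<Longrightarrow> u (mact K x f) = mact M (u x) f"
    using u unfolding rmod_hom_def by blast
  have vact: "\<And>x f. x \<in> mcarrier M \<Longrightarrow> f \<in> ldual lm \<Longrightarrow> v (mact M x f) = mact N (v x) f"
    using v unfolding rmod_hom_def by blast
  show "inj_on u (Rat lm eps K) \<and>
        u ` Rat lm eps K = {x \<in> Rat lm eps M. v x = mzero N} \<and>
        v ` Rat lm eps M = Rat lm eps N"
  proof (intro conjI)
    show "inj_on u (Rat lm eps K)" using inj RK inj_on_subset by blast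
    show "u ` Rat lm eps K = {x \<in> Rat lm eps M. v x = mzero N}"
    proof
      show "u ` Rat lm eps K \<subseteq> {x \<in> Rat lm eps M. v x = mzero N}"
        using Rat_hom[OF K M u] ker RK by blast
      show "{x \<in> Rat lm eps M. v x = mzero N} \<subseteq> u ` Rat lm eps K"
      proof
        fix x assume x: "x \<in> {x \<in> Rat lm eps M. v x = mzero N}"
        then obtain k where k: "k \<in> mcarrier K" "x = u k" using ker RM by blast
        obtain t where t: "t \<in> Rat lm eps (dual_rmod lm rm Dl)" and xt: "mact M x t = x"
          using Rat_unit[OF M _ d] x by blast
        have kt: "mact K k t \<in> Rat lm eps K" using Rat_mult[OF K k(1) t] .
        have "u (mact K k t) = u k" using uact[OF k(1) Tl[OF t]] xt k by simp
        then have "mact K k t = k" using inj kt RK k(1) unfolding inj_on_def by blast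
        then show "x \<in> u ` Rat lm eps K" using kt k by (metis image_eqI)
      qed
    qed
    show "v ` Rat lm eps M = Rat lm eps N"
    proof
      show "v ` Rat lm eps M \<subseteq> Rat lm eps N" using Rat_hom[OF M N v] by blast
      show "Rat lm eps N \<subseteq> v ` Rat lm eps M"
      proof
        fix n assume n: "n \<in> Rat lm eps N"
        obtain t where t: "t \<in> Rat lm eps (dual_rmod lm rm Dl)" and nt: "mact N n t = n"
          using Rat_unit[OF N n d] by blast
        obtain x where x: "x \<in> mcarrier M" "n = v x" using surj n RN by blast
        have "mact M x t \<in> Rat lm eps M" using Rat_mult[OF M x(1) t] .
        moreover have "v (mact M x t) = n" using vact[OF x(1) Tl[OF t]] x nt by simp
        ultimately show "n \<in> v ` Rat lm eps M" by force
      qed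
    qed
  qed
qed

theorem dense_equiv:
  "dense_Cadic_top lm rm Dl (Rat lm eps (dual_rmod lm rm Dl))
     \<longleftrightarrow> dense_finite_top lm (Rat lm eps (dual_rmod lm rm Dl))"
proof
  have Tl: "\<And>t. t \<in> Rat lm eps (dual_rmod lm rm Dl) \<Longrightarrow> t \<in> ldual lm" unfolding Rat_dual_iff by blast
  assume d: "dense_Cadic_top lm rm Dl (Rat lm eps (dual_rmod lm rm Dl))"
  show "dense_finite_top lm (Rat lm eps (dual_rmod lm rm Dl))"
    unfolding dense_finite_top_def
  proof (intro ballI allI impI)
    fix f F assume f: "f \<in> ldual lm" and F: "finite (F :: 'c set)"
    obtain g where g: "g \<in> Rat lm eps (dual_rmod lm rm Dl)" and ge: "\<forall>c\<in>F. cact rm Dl c g = cact rm Dl c f"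
      using d f F unfolding dense_Cadic_top_def by blast
    have "\<forall>c\<in>F. g c = f c" using ge eps_cact[OF Tl[OF g]] eps_cact[OF f] by metis
    then show "\<exists>g \<in> Rat lm eps (dual_rmod lm rm Dl). \<forall>c\<in>F. g c = f c" using g by blast
  qed
next
  assume d: "dense_finite_top lm (Rat lm eps (dual_rmod lm rm Dl))"
  show "dense_Cadic_top lm rm Dl (Rat lm eps (dual_rmod lm rm Dl))"
    unfolding dense_Cadic_top_def
  proof (intro ballI allI impI)
    fix f F assume f: "f \<in> ldual lm" and F: "finite (F :: 'c set)"
    let ?F = "\<Union>c\<in>F. snd ` set (Dl c)"
    have "finite ?F" using F by auto
    then obtain g where g: "g \<in> Rat lm eps (dual_rmod lm rm Dl)" and ge: "\<forall>c\<in>?F. g c = f c"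
      using d f unfolding dense_finite_top_def by blast
    have "\<forall>c\<in>F. cact rm Dl c g = cact rm Dl c f"
    proof
      fix c assume c: "c \<in> F"
      show "cact rm Dl c g = cact rm Dl c f"
        unfolding cact_def
        by (rule sum_list_cong) (use ge c in \<open>force simp: case_prod_unfold\<close>)
    qed
    then show "\<exists>g \<in> Rat lm eps (dual_rmod lm rm Dl). \<forall>c\<in>F. cact rm Dl c g = cact rm Dl c f" using g by blast
  qed
qed

end




definition padd :: "(nat \<Rightarrow> ('c::ab_group_add \<Rightarrow> 'r::ring_1) \<times> 'c) \<Rightarrow> (nat \<Rightarrow> ('c \<Rightarrow> 'r) \<times> 'c) \<Rightarrow> (nat \<Rightarrow> ('c \<Rightarrow> 'r) \<times> 'c)" where
  "padd x y = (\<lambda>n. ((\<lambda>c. fst (x n) c + fst (y n) c), snd (x n) + snd (y n)))"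
definition pzero :: "nat \<Rightarrow> ('c::ab_group_add \<Rightarrow> 'r::ring_1) \<times> 'c" where
  "pzero = (\<lambda>n. ((\<lambda>c. 0), 0))"
definition pneg :: "(nat \<Rightarrow> ('c::ab_group_add \<Rightarrow> 'r::ring_1) \<times> 'c) \<Rightarrow> (nat \<Rightarrow> ('c \<Rightarrow> 'r) \<times> 'c)" where
  "pneg x = (\<lambda>n. ((\<lambda>c. - fst (x n) c), - snd (x n)))"
definition emb :: "('c::ab_group_add \<Rightarrow> 'r::ring_1) \<Rightarrow> (nat \<Rightarrow> ('c \<Rightarrow> 'r) \<times> 'c)" where
  "emb h = (\<lambda>n. (h, 0))"

context cor
begin

lemma sub_rmodule:
  assumes M: "rmodule lm rm Dl eps M" and S: "S \<subseteq> mcarrier M" "mzero M \<in> S"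
    "\<And>x y. x \<in> S \<Longrightarrow> y \<in> S \<Longrightarrow> madd M x y \<in> S" "\<And>x. x \<in> S \<Longrightarrow> mneg M x \<in> S"
    "\<And>x f. x \<in> S \<Longrightarrow> f \<in> ldual lm \<Longrightarrow> mact M x f \<in> S"
  shows "rmodule lm rm Dl eps (M\<lparr>mcarrier := S\<rparr>)"
proof -
  have e: "mcarrier (M\<lparr>mcarrier := S\<rparr>) = S" "madd (M\<lparr>mcarrier := S\<rparr>) = madd M"
    "mzero (M\<lparr>mcarrier := S\<rparr>) = mzero M" "mneg (M\<lparr>mcarrier := S\<rparr>) = mneg M"
    "mact (M\<lparr>mcarrier := S\<rparr>) = mact M" by simp_all
  show ?thesis unfolding rmodule_def e
    apply (intro conjI ballI)
    by (metis S subsetD md_assoc[OF M] md_comm[OF M] md_lzero[OF M] md_linv[OF M] md_act_add[OF M]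
      md_act_fadd[OF M] md_act_conv[OF M] md_act_eps[OF M])+
qed

definition wemb :: "(nat \<Rightarrow> 'c) \<Rightarrow> ('c \<Rightarrow> 'r) \<Rightarrow> (nat \<Rightarrow> ('c \<Rightarrow> 'r) \<times> 'c)" where
  "wemb cf h = (\<lambda>n. ((\<lambda>c. 0), cact rm Dl (cf n) h))"

definition Mmod :: "(nat \<Rightarrow> ('c \<Rightarrow> 'r) \<times> 'c, 'c, 'r) rmod" where
  "Mmod = \<lparr>mcarrier = emb ` ldual lm, madd = padd, mzero = pzero, mneg = pneg,
     mact = (\<lambda>x g. emb (conv rm Dl (fst (x 0)) g))\<rparr>"

definition Nmod :: "(nat \<Rightarrow> 'c) \<Rightarrow> (nat \<Rightarrow> ('c \<Rightarrow> 'r) \<times> 'c, 'c, 'r) rmod" where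
  "Nmod cf = \<lparr>mcarrier = wemb cf ` ldual lm, madd = padd, mzero = pzero, mneg = pneg,
     mact = (\<lambda>x g. \<lambda>n. ((\<lambda>c. 0), cact rm Dl (snd (x n)) g))\<rparr>"

definition vmap :: "(nat \<Rightarrow> 'c) \<Rightarrow> (nat \<Rightarrow> ('c \<Rightarrow> 'r) \<times> 'c) \<Rightarrow> (nat \<Rightarrow> ('c \<Rightarrow> 'r) \<times> 'c)" where
  "vmap cf x = wemb cf (fst (x 0))"

definition Kmod :: "(nat \<Rightarrow> 'c) \<Rightarrow> (nat \<Rightarrow> ('c \<Rightarrow> 'r) \<times> 'c, 'c, 'r) rmod" where
  "Kmod cf = Mmod\<lparr>mcarrier := {x \<in> emb ` ldual lm. vmap cf x = pzero}\<rparr>"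

lemma padd_emb: "padd (emb a) (emb b) = emb (\<lambda>c. a c + b c)"
  by (simp add: padd_def emb_def)
lemma pneg_emb: "pneg (emb a) = emb (\<lambda>c. - a c)"
  by (simp add: pneg_def emb_def)
lemma pzero_emb: "pzero = emb (\<lambda>c. 0)"
  by (simp add: pzero_def emb_def)
lemma emb_fst[simp]: "fst (emb a n) = a" by (simp add: emb_def)
lemma emb_inj: "emb a = emb b \<longleftrightarrow> a = b"
  by (auto simp: emb_def fun_eq_iff)

lemma conv_fadd1:
  assumes "a \<in> ldual lm" "b \<in> ldual lm" "f \<in> ldual lm"
  shows "conv rm Dl (\<lambda>c. a c + b c) f = (\<lambda>c. conv rm Dl a f c + conv rm Dl b f c)"
  using assms by (simp add: conv_def cact_fadd ldual_add fun_eq_iff)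

lemma conv_fadd2: "conv rm Dl a (\<lambda>c. f c + g c) = (\<lambda>c. conv rm Dl a f c + conv rm Dl a g c)"
  by (simp add: conv_def)

lemma conv_assoc:
  assumes "a \<in> ldual lm" "f \<in> ldual lm" "g \<in> ldual lm"
  shows "conv rm Dl a (conv rm Dl f g) = conv rm Dl (conv rm Dl a f) g"
  using assms coassoc_act[unfolded conv_def] by (simp add: conv_def fun_eq_iff)

lemma conv_eps: "a \<in> ldual lm \<Longrightarrow> conv rm Dl a eps = a"
  by (simp add: conv_def eps_cact fun_eq_iff)

lemma M_rmod: "rmodule lm rm Dl eps Mmod"
  unfolding rmodule_def Mmod_def
  apply (simp only: rmod.simps)
  apply (intro conjI ballI)
  by (auto simp: padd_emb pneg_emb pzero_emb emb_inj zero_ldual add_ldual neg_ldual conv_ldual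
      conv_fadd1 conv_fadd2 conv_assoc conv_eps algebra_simps intro!: imageI)

lemma padd_wemb: "a \<in> ldual lm \<Longrightarrow> b \<in> ldual lm \<Longrightarrow> padd (wemb cf a) (wemb cf b) = wemb cf (\<lambda>c. a c + b c)"
  by (simp add: padd_def wemb_def cact_fadd)
lemma pneg_wemb: "pneg (wemb cf a) = wemb cf (\<lambda>c. - a c)"
  by (simp add: pneg_def wemb_def cact_fneg)
lemma pzero_wemb: "pzero = wemb cf (\<lambda>c. 0)"
  by (simp add: pzero_def wemb_def cact_fzero)
lemma act_wemb: "a \<in> ldual lm \<Longrightarrow> g \<in> ldual lm \<Longrightarrow>
   (\<lambda>n. ((\<lambda>c. 0), cact rm Dl (snd (wemb cf a n)) g)) = wemb cf (conv rm Dl a g)"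
  by (simp add: wemb_def coassoc_act)

lemma N_rmod: "rmodule lm rm Dl eps (Nmod cf)"
proof -
  have A: "\<And>x f. x \<in> wemb cf ` ldual lm \<Longrightarrow> f \<in> ldual lm \<Longrightarrow>
     (\<lambda>n. ((\<lambda>c. 0), cact rm Dl (snd (x n)) f)) \<in> wemb cf ` ldual lm"
    using act_wemb conv_ldual by auto
  show ?thesis
  unfolding rmodule_def Nmod_def
  apply (simp only: rmod.simps)
  apply (intro conjI ballI)
  apply (auto simp: pzero_wemb[of cf] padd_wemb pneg_wemb zero_ldual add_ldual neg_ldual act_wemb conv_ldual
      conv_fadd1 conv_fadd2 conv_assoc conv_eps algebra_simps intro!: imageI)
  apply (auto simp: wemb_def coassoc_act conv_ldual cact_eps)
  done
qed

end




context cor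
begin

lemma vmap_emb[simp]: "vmap cf (emb a) = wemb cf a"
  by (simp add: vmap_def)

lemma K_rmod: "rmodule lm rm Dl eps (Kmod cf)"
  unfolding Kmod_def
proof (rule sub_rmodule[OF M_rmod])
  show "{x \<in> emb ` ldual lm. vmap cf x = pzero} \<subseteq> mcarrier Mmod" by (auto simp: Mmod_def)
  show "mzero Mmod \<in> {x \<in> emb ` ldual lm. vmap cf x = pzero}"
    by (auto simp: Mmod_def pzero_emb zero_ldual pzero_wemb[of cf, symmetric])
  show "madd Mmod x y \<in> {x \<in> emb ` ldual lm. vmap cf x = pzero}"
    if "x \<in> {x \<in> emb ` ldual lm. vmap cf x = pzero}" "y \<in> {x \<in> emb ` ldual lm. vmap cf x = pzero}" for x y
    using that by (auto simp: Mmod_def padd_emb add_ldual padd_wemb[symmetric])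
      (simp add: padd_def pzero_def)
  show "mneg Mmod x \<in> {x \<in> emb ` ldual lm. vmap cf x = pzero}"
    if "x \<in> {x \<in> emb ` ldual lm. vmap cf x = pzero}" for x
    using that by (auto simp: Mmod_def pneg_emb neg_ldual pneg_wemb[symmetric])
      (simp add: pneg_def pzero_def)
  show "mact Mmod x f \<in> {x \<in> emb ` ldual lm. vmap cf x = pzero}"
    if "x \<in> {x \<in> emb ` ldual lm. vmap cf x = pzero}" "f \<in> ldual lm" for x f
  proof -
    from that(1) obtain a where a1: "a \<in> ldual lm" "x = emb a" by blast
    have "wemb cf a = pzero" using that(1) a1 by simp
    note a = a1 this
    have "wemb cf (conv rm Dl a f) = (\<lambda>n. ((\<lambda>c. 0), cact rm Dl (snd (wemb cf a n)) f))"
      using act_wemb[OF a(1) that(2)] by simp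
    also have "\<dots> = pzero" using a(3) cact_zero[OF that(2)] by (simp add: pzero_def)
    finally show ?thesis using a that(2) conv_ldual by (auto simp: Mmod_def)
  qed
qed

lemma u_hom: "rmod_hom lm (Kmod cf) Mmod id"
  unfolding rmod_hom_def Kmod_def by (auto simp: Mmod_def)

lemma v_hom: "rmod_hom lm Mmod (Nmod cf) (vmap cf)"
  unfolding rmod_hom_def Mmod_def Nmod_def
  by (auto simp: padd_emb add_ldual padd_wemb act_wemb)

lemma msum_N_form:
  "msum (Nmod cf) (map (\<lambda>q. \<lambda>n. ((\<lambda>c. 0), Y q n)) xs) = (\<lambda>n. ((\<lambda>c. 0), sum_list (map (\<lambda>q. Y q n) xs)))"
  by (induction xs) (simp_all add: msum_def Nmod_def padd_def pzero_def)

lemma msum_M_form: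
  "msum Mmod (map (\<lambda>q. emb (Z q)) xs) = emb (foldr (\<lambda>f g c. f c + g c) (map Z xs) (\<lambda>c. 0))"
  by (induction xs) (simp_all add: msum_def Mmod_def padd_emb pzero_emb)

lemma key_expand:
  assumes f: "f \<in> ldual lm" and g: "g \<in> ldual lm"
    and qs: "\<forall>(\<phi>, d) \<in> set qs. \<phi> \<in> ldual lm"
    and ex: "\<forall>(a, b) \<in> set (Dl c). cact rm Dl b f = sum_list (map (\<lambda>(\<phi>, d). lm (\<phi> (cact rm Dl b f)) d) qs)"
  shows "cact rm Dl c (conv rm Dl f g) = sum_list (map (\<lambda>(\<phi>, d). rm (cact rm Dl c (conv rm Dl f \<phi>)) (g d)) qs)"
proof -
  have "cact rm Dl c (conv rm Dl f g) = sum_list (map (\<lambda>(a, b). rm a (g (cact rm Dl b f))) (Dl c))"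
    by (simp add: cact_def conv_def)
  also have "\<dots> = sum_list (map (\<lambda>(a, b). sum_list (map (\<lambda>(\<phi>, d). rm (rm a (\<phi> (cact rm Dl b f))) (g d)) qs)) (Dl c))"
  proof (rule sum_list_cong)
    fix p assume p: "p \<in> set (Dl c)"
    obtain a b where pab: "p = (a, b)" by (cases p)
    have "g (cact rm Dl b f) = g (sum_list (map (\<lambda>(\<phi>, d). lm (\<phi> (cact rm Dl b f)) d) qs))"
      using ex p pab by auto
    also have "\<dots> = sum_list (map (\<lambda>(\<phi>, d). \<phi> (cact rm Dl b f) * g d) qs)"
      by (simp add: ldual_sum_list[OF g] o_def case_prod_unfold ldual_lm[OF g])
    finally have "rm a (g (cact rm Dl b f)) = sum_list (map (\<lambda>(\<phi>, d). rm (rm a (\<phi> (cact rm Dl b f))) (g d)) qs)"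
      by (simp add: rm_sum_list_r o_def case_prod_unfold rm_mult)
    then show "(\<lambda>(a, b). rm a (g (cact rm Dl b f))) p =
      (\<lambda>(a, b). sum_list (map (\<lambda>(\<phi>, d). rm (rm a (\<phi> (cact rm Dl b f))) (g d)) qs)) p"
      using pab by simp
  qed
  also have "\<dots> = sum_list (map (\<lambda>q. sum_list (map (\<lambda>p. (\<lambda>(a, b). (\<lambda>(\<phi>, d). rm (rm a (\<phi> (cact rm Dl b f))) (g d))) p q) (Dl c))) qs)"
    using sum_list_swap[of "\<lambda>p q. (\<lambda>(a, b). (\<lambda>(\<phi>, d). rm (rm a (\<phi> (cact rm Dl b f))) (g d))) p q" qs "Dl c"]
    by (simp add: case_prod_unfold)
  also have "\<dots> = sum_list (map (\<lambda>(\<phi>, d). rm (cact rm Dl c (conv rm Dl f \<phi>)) (g d)) qs)"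
    by (simp add: cact_def conv_def rm_sum_list o_def case_prod_unfold)
  finally show ?thesis .
qed

theorem exact_dense:
  assumes la: "left_alpha lm"
    and ex: "Rat_exact lm rm Dl eps TYPE(nat \<Rightarrow> ('c \<Rightarrow> 'r) \<times> 'c)
              TYPE(nat \<Rightarrow> ('c \<Rightarrow> 'r) \<times> 'c) TYPE(nat \<Rightarrow> ('c \<Rightarrow> 'r) \<times> 'c)"
  shows "dense_Cadic_top lm rm Dl (Rat lm eps (dual_rmod lm rm Dl))"
  unfolding dense_Cadic_top_def
proof (intro ballI allI impI)
  fix f F assume f: "f \<in> ldual lm" and F: "finite (F :: 'c set)"
  obtain cs where cs: "set cs = F" using finite_list[OF F] by blast
  define cf where "cf n = (if n < length cs then cs ! n else 0)" for n
  define D where "D = set cs \<union> {0}"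
  have cfD: "cf n \<in> D" for n by (auto simp: cf_def D_def)
  define G where "G = (\<Union>d\<in>D. (\<lambda>(a, b). cact rm Dl b f) ` set (Dl d))"
  have "finite G" by (simp add: G_def D_def)
  then obtain qs :: "(('c \<Rightarrow> 'r) \<times> 'c) list" where qs: "\<forall>(\<phi>, d) \<in> set qs. \<phi> \<in> ldual lm"
    and qe: "\<forall>z \<in> G. z = sum_list (map (\<lambda>(\<phi>, d). lm (\<phi> z) d) qs)"
    using la unfolding left_alpha_def by blast
  let ?ps = "map (\<lambda>(\<phi>, d). (wemb cf (conv rm Dl f \<phi>), d)) qs"
  have "wemb cf f \<in> Rat lm eps (Nmod cf)"
    unfolding Rat_def
  proof (intro CollectI conjI exI[of _ ?ps] ballI)
    show "wemb cf f \<in> mcarrier (Nmod cf)" using f by (simp add: Nmod_def)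
    show "\<And>x. x \<in> set ?ps \<Longrightarrow> (\<lambda>(mi, ci). mi \<in> mcarrier (Nmod cf)) x"
      using qs conv_ldual[OF f] by (auto simp: Nmod_def)
    fix g assume g: "g \<in> ldual lm"
    have lhs: "mact (Nmod cf) (wemb cf f) g = wemb cf (conv rm Dl f g)"
      using act_wemb[OF f g] by (simp add: Nmod_def)
    have mapeq: "map (\<lambda>(mi, ci). mact (Nmod cf) mi (\<lambda>c. eps c * g ci)) ?ps
        = map (\<lambda>q. \<lambda>n. ((\<lambda>c. 0), (\<lambda>(\<phi>, d). rm (cact rm Dl (cf n) (conv rm Dl f \<phi>)) (g d)) q)) qs"
      by (simp add: Nmod_def wemb_def cact_epsr case_prod_unfold)
    have rhs: "msum (Nmod cf) (map (\<lambda>(mi, ci). mact (Nmod cf) mi (\<lambda>c. eps c * g ci)) ?ps)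
        = (\<lambda>n. ((\<lambda>c. 0), sum_list (map (\<lambda>(\<phi>, d). rm (cact rm Dl (cf n) (conv rm Dl f \<phi>)) (g d)) qs)))"
      unfolding mapeq by (rule msum_N_form)
    have "cact rm Dl (cf n) (conv rm Dl f g) = sum_list (map (\<lambda>(\<phi>, d). rm (cact rm Dl (cf n) (conv rm Dl f \<phi>)) (g d)) qs)" for n
    proof (rule key_expand[OF f g qs])
      show "\<forall>(a, b) \<in> set (Dl (cf n)). cact rm Dl b f = sum_list (map (\<lambda>(\<phi>, d). lm (\<phi> (cact rm Dl b f)) d) qs)"
        using qe cfD[of n] unfolding G_def by fastforce
    qed
    then show "mact (Nmod cf) (wemb cf f) g = msum (Nmod cf) (map (\<lambda>(mi, ci). mact (Nmod cf) mi (\<lambda>c. eps c * g ci)) ?ps)"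
      using lhs rhs by (simp add: wemb_def)
  qed
  moreover have "vmap cf ` Rat lm eps Mmod = Rat lm eps (Nmod cf)"
  proof -
    have "inj_on id (mcarrier (Kmod cf))" by simp
    moreover have "id ` mcarrier (Kmod cf) = {x \<in> mcarrier Mmod. vmap cf x = mzero (Nmod cf)}"
      by (simp add: Kmod_def Mmod_def Nmod_def)
    moreover have "vmap cf ` mcarrier Mmod = mcarrier (Nmod cf)"
      by (auto simp: Mmod_def Nmod_def image_image)
    ultimately have H: "rmodule lm rm Dl eps (Kmod cf) \<and> rmodule lm rm Dl eps Mmod \<and> rmodule lm rm Dl eps (Nmod cf) \<and>
        rmod_hom lm (Kmod cf) Mmod id \<and> rmod_hom lm Mmod (Nmod cf) (vmap cf) \<and>
        inj_on id (mcarrier (Kmod cf)) \<and>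
        id ` mcarrier (Kmod cf) = {x \<in> mcarrier Mmod. vmap cf x = mzero (Nmod cf)} \<and>
        vmap cf ` mcarrier Mmod = mcarrier (Nmod cf)"
      using K_rmod[of cf] M_rmod N_rmod[of cf] u_hom[of cf] v_hom[of cf] by simp
    have "inj_on id (Rat lm eps (Kmod cf)) \<and>
        id ` Rat lm eps (Kmod cf) = {x \<in> Rat lm eps Mmod. vmap cf x = mzero (Nmod cf)} \<and>
        vmap cf ` Rat lm eps Mmod = Rat lm eps (Nmod cf)"
      by (rule ex[unfolded Rat_exact_def, rule_format, OF H])
    then show ?thesis by (elim conjE)
  qed
  ultimately obtain y where y: "y \<in> Rat lm eps Mmod" "vmap cf y = wemb cf f" by force
  then obtain ps where yc: "y \<in> emb ` ldual lm" and ps: "\<forall>(mi, ci) \<in> set ps. mi \<in> emb ` ldual lm"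
    and eq: "\<forall>f' \<in> ldual lm. emb (conv rm Dl (fst (y 0)) f') =
       msum Mmod (map (\<lambda>(mi, ci). emb (conv rm Dl (fst (mi 0)) (\<lambda>c. eps c * f' ci))) ps)"
    unfolding Rat_def by (auto simp: Mmod_def)
  obtain g0 where g0: "g0 \<in> ldual lm" "y = emb g0" using yc by blast
  have agree: "cact rm Dl (cf n) g0 = cact rm Dl (cf n) f" for n
    using y(2) g0 by (simp add: wemb_def fun_eq_iff)
  let ?ps = "map (\<lambda>(mi, ci). (fst (mi 0), ci)) ps"
  have "g0 \<in> Rat lm eps (dual_rmod lm rm Dl)"
    unfolding Rat_dual_iff
  proof (intro conjI exI[of _ ?ps] ballI g0(1))
    show "\<And>x. x \<in> set ?ps \<Longrightarrow> (\<lambda>(mi, ci). mi \<in> ldual lm) x" using ps by auto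
    fix f' assume f': "f' \<in> ldual lm"
    have "emb (conv rm Dl g0 f') = msum Mmod (map (\<lambda>q. emb ((\<lambda>(mi, ci). conv rm Dl (fst (mi 0)) (\<lambda>c. eps c * f' ci)) q)) ps)"
      using eq f' g0 by (simp add: case_prod_unfold)
    also have "\<dots> = emb (foldr (\<lambda>f g c. f c + g c) (map (\<lambda>(mi, ci). conv rm Dl (fst (mi 0)) (\<lambda>c. eps c * f' ci)) ps) (\<lambda>c. 0))"
      by (rule msum_M_form)
    finally show "conv rm Dl g0 f' = foldr (\<lambda>f g c. f c + g c) (map (\<lambda>(mi, ci). conv rm Dl mi (\<lambda>c. eps c * f' ci)) ?ps) (\<lambda>c. 0)"
      by (simp add: emb_inj o_def case_prod_unfold)
  qed
  moreover have "\<forall>c \<in> F. cact rm Dl c g0 = cact rm Dl c f"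
  proof
    fix c assume "c \<in> F"
    then obtain n where "n < length cs" "cs ! n = c" using cs by (auto simp: in_set_conv_nth)
    then have "cf n = c" by (simp add: cf_def)
    then show "cact rm Dl c g0 = cact rm Dl c f" using agree[of n] by simp
  qed
  ultimately show "\<exists>g \<in> Rat lm eps (dual_rmod lm rm Dl). \<forall>c \<in> F. cact rm Dl c g = cact rm Dl c f" by blast
qed

end


theorem proposition2p3:
  fixes lm :: "'r::ring_1 \<Rightarrow> 'c::ab_group_add \<Rightarrow> 'c"
    and rm :: "'c \<Rightarrow> 'r \<Rightarrow> 'c"
    and Dl :: "'c \<Rightarrow> ('c \<times> 'c) list"
    and eps :: "'c \<Rightarrow> 'r"
  assumes "coring lm rm Dl eps"
    and "left_alpha lm"
  shows "(dense_Cadic_top lm rm Dl (Rat lm eps (dual_rmod lm rm Dl))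
            \<longleftrightarrow> dense_finite_top lm (Rat lm eps (dual_rmod lm rm Dl)))
       \<and> (dense_finite_top lm (Rat lm eps (dual_rmod lm rm Dl))
            \<longrightarrow> Rat_exact lm rm Dl eps TYPE('k) TYPE('m) TYPE('n))
       \<and> (Rat_exact lm rm Dl eps TYPE(nat \<Rightarrow> ('c \<Rightarrow> 'r) \<times> 'c)
              TYPE(nat \<Rightarrow> ('c \<Rightarrow> 'r) \<times> 'c) TYPE(nat \<Rightarrow> ('c \<Rightarrow> 'r) \<times> 'c)
            \<longrightarrow> dense_Cadic_top lm rm Dl (Rat lm eps (dual_rmod lm rm Dl)))"
proof -
  interpret cor lm rm Dl eps by unfold_locales (rule assms(1))
  show ?thesis
    using dense_equiv dense_exact[where 'k='k and 'm='m and 'n='n] exact_dense[OF assms(2)] by blast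
qed

end
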